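(* Let $\mathcal H$ be a separable complex Hilbert space, $A_1,A_2\in L(\mathcal H)^+$, $B\in L(\mathcal H)$ with closed range. Then $B$ admits an $A_1A_2$-inverse if and only if the pairs $(A_1,R(B))$ and $(A_2,N(A_1B))$ are compatible.
   Context: $\|z\|_{A}=\langle Az,z\rangle^{1/2}$ for $A\in L(\mathcal H)^+$. For $y\in\mathcal H$, $x_0$ is an $A_1$-least squares solution ($A_1$-LSS) of $Bx=y$ if $\|y-Bx_0\|_{A_1}\le\|y-Bx\|_{A_1}$ for all $x\in\mathcal H$. $G\in L(\mathcal H)$ is an $A_1$-inverse of $B$ if $Gy$ is an $A_1$-LSS of $Bx=y$ for every $y$; $G$ is an $A_1A_2$-inverse of $B$ if moreover, for each $y$, $\|Gy\|_{A_2}\le\|x_0\|_{A_2}$ for every $A_1$-LSS $x_0$ of $Bx=y$. A pair $(A,\mathcal S)$ ($A\in L(\mathcal H)^+$, $\mathcal S$ closed subspace) is compatible if there exists $Q\in L(\mathcal H)$ with $Q^2=Q$, $R(Q)=\mathcal S$, $AQ=Q^*A$. $N(\cdot)$ denotes nullspace. *)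

theory Defs
  imports "HOL-Analysis.Analysis"
begin

class complex_inner = real_normed_vector +
  fixes scaleC :: "complex \<Rightarrow> 'a \<Rightarrow> 'a" (infixr "*\<^sub>C" 75)
    and cinner :: "'a \<Rightarrow> 'a \<Rightarrow> complex"
  assumes scaleC_add_right: "c *\<^sub>C (x + y) = c *\<^sub>C x + c *\<^sub>C y"
    and scaleC_add_left: "(b + c) *\<^sub>C x = b *\<^sub>C x + c *\<^sub>C x"
    and scaleC_scaleC: "b *\<^sub>C (c *\<^sub>C x) = (b * c) *\<^sub>C x"
    and scaleC_one: "1 *\<^sub>C x = x"
    and scaleR_scaleC: "scaleR r x = complex_of_real r *\<^sub>C x"
    and cinner_commute: "cinner x y = cnj (cinner y x)"
    and cinner_add_left: "cinner (x + y) z = cinner x z + cinner y z"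
    and cinner_scaleC_left: "cinner (c *\<^sub>C x) y = c * cinner x y"
    and cinner_self_real: "cinner x x \<in> \<real>"
    and cinner_self_nonneg: "0 \<le> Re (cinner x x)"
    and cinner_self_eq_0: "cinner x x = 0 \<longleftrightarrow> x = 0"
    and norm_eq_sqrt_cinner: "norm x = sqrt (Re (cinner x x))"

definition separable_space :: "'a::topological_space itself \<Rightarrow> bool" where
  "separable_space _ \<longleftrightarrow> (\<exists>D::'a set. countable D \<and> closure D = UNIV)"

definition bounded_clinear_op :: "('a::complex_inner \<Rightarrow> 'a) \<Rightarrow> bool" where
  "bounded_clinear_op T \<longleftrightarrow>
     (\<forall>x y. T (x + y) = T x + T y) \<and> (\<forall>c x. T (c *\<^sub>C x) = c *\<^sub>C T x) \<and>
     (\<exists>K. \<forall>x. norm (T x) \<le> norm x * K)"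

definition positive_op :: "('a::complex_inner \<Rightarrow> 'a) \<Rightarrow> bool" where
  "positive_op A \<longleftrightarrow> bounded_clinear_op A \<and>
     (\<forall>z. cinner (A z) z \<in> \<real> \<and> 0 \<le> Re (cinner (A z) z))"

definition is_adjoint :: "('a::complex_inner \<Rightarrow> 'a) \<Rightarrow> ('a \<Rightarrow> 'a) \<Rightarrow> bool" where
  "is_adjoint T Ts \<longleftrightarrow> (\<forall>x y. cinner (T x) y = cinner x (Ts y))"

definition seminormA :: "('a::complex_inner \<Rightarrow> 'a) \<Rightarrow> 'a \<Rightarrow> real" where
  "seminormA A z = sqrt (Re (cinner (A z) z))"

definition is_A_LSS :: "('a::complex_inner \<Rightarrow> 'a) \<Rightarrow> ('a \<Rightarrow> 'a) \<Rightarrow> 'a \<Rightarrow> 'a \<Rightarrow> bool" where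
  "is_A_LSS A1 B y x0 \<longleftrightarrow> (\<forall>x. seminormA A1 (y - B x0) \<le> seminormA A1 (y - B x))"

definition is_A_inverse :: "('a::complex_inner \<Rightarrow> 'a) \<Rightarrow> ('a \<Rightarrow> 'a) \<Rightarrow> ('a \<Rightarrow> 'a) \<Rightarrow> bool" where
  "is_A_inverse A1 B G \<longleftrightarrow> bounded_clinear_op G \<and> (\<forall>y. is_A_LSS A1 B y (G y))"

definition is_AA_inverse ::
  "('a::complex_inner \<Rightarrow> 'a) \<Rightarrow> ('a \<Rightarrow> 'a) \<Rightarrow> ('a \<Rightarrow> 'a) \<Rightarrow> ('a \<Rightarrow> 'a) \<Rightarrow> bool" where
  "is_AA_inverse A1 A2 B G \<longleftrightarrow> is_A_inverse A1 B G \<and>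
     (\<forall>y x0. is_A_LSS A1 B y x0 \<longrightarrow> seminormA A2 (G y) \<le> seminormA A2 x0)"

definition closed_csubspace :: "'a::complex_inner set \<Rightarrow> bool" where
  "closed_csubspace S \<longleftrightarrow> closed S \<and> 0 \<in> S \<and> (\<forall>x\<in>S. \<forall>y\<in>S. x + y \<in> S) \<and>
     (\<forall>c. \<forall>x\<in>S. c *\<^sub>C x \<in> S)"

definition compatible :: "('a::complex_inner \<Rightarrow> 'a) \<Rightarrow> 'a set \<Rightarrow> bool" where
  "compatible A S \<longleftrightarrow> positive_op A \<and> closed_csubspace S \<and>
     (\<exists>Q Qs. bounded_clinear_op Q \<and> Q \<circ> Q = Q \<and> range Q = S \<and>
             is_adjoint Q Qs \<and> A \<circ> Q = Qs \<circ> A)"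

end

theory Submission
  imports Defs
begin


section \<open>Basic inner product facts\<close>

context
begin

lemma scaleC_zero_right [simp]: "c *\<^sub>C (0::'a::complex_inner) = 0"
  using scaleC_add_right[of c "0::'a" 0] by simp

lemma scaleC_zero_left [simp]: "(0::complex) *\<^sub>C (x::'a::complex_inner) = 0"
  using scaleC_add_left[of 0 0 x] by simp

lemma scaleC_of_real: "complex_of_real r *\<^sub>C (x::'a::complex_inner) = r *\<^sub>R x"
  by (simp add: scaleR_scaleC)

lemma scaleC_minus_one: "(-1) *\<^sub>C (x::'a::complex_inner) = - x"
  using scaleR_scaleC[of "-1" x] by simp

lemma scaleC_minus_right: "c *\<^sub>C (- (x::'a::complex_inner)) = - (c *\<^sub>C x)"
proof -
  have "c *\<^sub>C (- x) + c *\<^sub>C x = 0" by (simp flip: scaleC_add_right)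
  then show ?thesis by (simp add: eq_neg_iff_add_eq_0)
qed

lemma scaleC_diff_right: "c *\<^sub>C ((x::'a::complex_inner) - y) = c *\<^sub>C x - c *\<^sub>C y"
  by (simp only: diff_conv_add_uminus scaleC_add_right scaleC_minus_right)

lemma cinner_add_right: "cinner x (y + z) = cinner x y + cinner (x::'a::complex_inner) z"
  by (subst (1 2 3) cinner_commute) (simp add: cinner_add_left)

lemma cinner_scaleC_right: "cinner x (c *\<^sub>C y) = cnj c * cinner (x::'a::complex_inner) y"
  by (subst (1 2) cinner_commute) (simp add: cinner_scaleC_left)
end

lemma cinner_zero_left [simp]: "cinner 0 (y::'a::complex_inner) = 0"
  using cinner_add_left[of "0::'a" 0 y] by simp

lemma cinner_zero_right [simp]: "cinner (y::'a::complex_inner) 0 = 0"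
  using cinner_add_right[of y "0::'a" 0] by simp

lemma cinner_minus_left: "cinner (- x) (y::'a::complex_inner) = - cinner x y"
proof -
  have "cinner (- x) y + cinner x y = 0" by (simp flip: cinner_add_left)
  then show ?thesis by (simp add: eq_neg_iff_add_eq_0)
qed

lemma cinner_minus_right: "cinner y (- x) = - cinner (y::'a::complex_inner) x"
proof -
  have "cinner y (- x) + cinner y x = 0" by (simp flip: cinner_add_right)
  then show ?thesis by (simp add: eq_neg_iff_add_eq_0)
qed

lemma cinner_diff_left: "cinner (x - z) (y::'a::complex_inner) = cinner x y - cinner z y"
  by (simp only: cinner_add_left cinner_minus_left diff_conv_add_uminus)

lemma cinner_diff_right: "cinner y (x - z) = cinner y x - cinner (y::'a::complex_inner) z"
  by (simp only: cinner_add_right cinner_minus_right diff_conv_add_uminus)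

lemma cinner_scaleR_left: "cinner (r *\<^sub>R x) (y::'a::complex_inner) = of_real r * cinner x y"
  by (simp add: scaleR_scaleC cinner_scaleC_left)

lemma cinner_scaleR_right: "cinner y (r *\<^sub>R x) = of_real r * cinner (y::'a::complex_inner) x"
  by (simp add: scaleR_scaleC cinner_scaleC_right)

lemma cinner_self_of_real: "cinner x x = complex_of_real ((norm (x::'a::complex_inner))\<^sup>2)"
proof -
  obtain r where r: "cinner x x = of_real r"
    using cinner_self_real[of x] by (auto elim: Reals_cases)
  have "(norm x)\<^sup>2 = Re (cinner x x)"
    using norm_eq_sqrt_cinner[of x] cinner_self_nonneg[of x] by simp
  then show ?thesis using r by simp
qed

lemma Re_cinner_self: "Re (cinner x x) = (norm (x::'a::complex_inner))\<^sup>2"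
  by (simp add: cinner_self_of_real)

lemma bclin_add: "bounded_clinear_op T \<Longrightarrow> T (x + y) = T x + T y"
  by (simp add: bounded_clinear_op_def)
lemma bclin_scaleC: "bounded_clinear_op T \<Longrightarrow> T (c *\<^sub>C x) = c *\<^sub>C T x"
  by (simp add: bounded_clinear_op_def)

lemma bclin_bounded_linear:
  assumes "bounded_clinear_op (T::'a::complex_inner \<Rightarrow> 'a)"
  shows "bounded_linear T"
proof
  show "T (x + y) = T x + T y" for x y using assms by (simp add: bounded_clinear_op_def)
  show "T (r *\<^sub>R x) = r *\<^sub>R T x" for r x
    using assms by (simp add: bounded_clinear_op_def scaleR_scaleC)
  show "\<exists>K. \<forall>x. norm (T x) \<le> norm x * K" using assms by (simp add: bounded_clinear_op_def)
qed

lemma bclin_zero: "bounded_clinear_op T \<Longrightarrow> T 0 = 0"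
  using real_vector.linear_0[OF bounded_linear.linear[OF bclin_bounded_linear]] by blast
lemma bclin_diff: "bounded_clinear_op T \<Longrightarrow> T (x - y) = T x - T y"
  using real_vector.linear_diff[OF bounded_linear.linear[OF bclin_bounded_linear]] by blast
lemma bclin_minus: "bounded_clinear_op T \<Longrightarrow> T (- x) = - T x"
  using real_vector.linear_neg[OF bounded_linear.linear[OF bclin_bounded_linear]] by blast
lemma bclin_scaleR: "bounded_clinear_op T \<Longrightarrow> T (r *\<^sub>R x) = r *\<^sub>R T x"
  by (simp add: bounded_clinear_op_def scaleR_scaleC)

lemma bclin_id: "bounded_clinear_op (\<lambda>x::'a::complex_inner. x)"
  unfolding bounded_clinear_op_def by (auto intro: exI[of _ 1])

lemma bclin_of_bounded_linear:
  assumes "bounded_linear T" "\<And>c x. T (c *\<^sub>C x) = c *\<^sub>C T x"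
  shows "bounded_clinear_op (T::'a::complex_inner \<Rightarrow> 'a)"
proof -
  obtain K where "\<forall>x. norm (T x) \<le> norm x * K"
    using bounded_linear.bounded[OF assms(1)] by blast
  then show ?thesis using assms
    by (auto simp add: bounded_clinear_op_def real_vector.linear_add[OF bounded_linear.linear[OF assms(1)]])
qed

lemma bclin_comp:
  assumes "bounded_clinear_op S" "bounded_clinear_op T"
  shows "bounded_clinear_op (\<lambda>x. S (T x))"
  apply (rule bclin_of_bounded_linear)
  using bounded_linear_compose[OF bclin_bounded_linear[OF assms(1)] bclin_bounded_linear[OF assms(2)]]
   apply simp
  using assms by (simp add: bclin_scaleC)

lemma bclin_diff_op:
  assumes "bounded_clinear_op S" "bounded_clinear_op T"
  shows "bounded_clinear_op (\<lambda>x. S x - T x)"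
  apply (rule bclin_of_bounded_linear)
  using bounded_linear_sub[OF bclin_bounded_linear[OF assms(1)] bclin_bounded_linear[OF assms(2)]]
   apply simp
  using assms by (simp add: bclin_scaleC scaleC_diff_right)

lemma bclin_add_op:
  assumes "bounded_clinear_op S" "bounded_clinear_op T"
  shows "bounded_clinear_op (\<lambda>x. S x + T x)"
  apply (rule bclin_of_bounded_linear)
  using bounded_linear_add[OF bclin_bounded_linear[OF assms(1)] bclin_bounded_linear[OF assms(2)]]
   apply simp
  using assms by (simp add: bclin_scaleC scaleC_add_right)

section \<open>Positive operators\<close>

lemma pos_bclin: "positive_op A \<Longrightarrow> bounded_clinear_op A"
  by (simp add: positive_op_def)

lemma pos_real: "positive_op A \<Longrightarrow> cinner (A z) z \<in> \<real>"
  by (simp add: positive_op_def)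

lemma pos_nonneg: "positive_op A \<Longrightarrow> 0 \<le> Re (cinner (A z) z)"
  by (simp add: positive_op_def)

lemma pos_id: "positive_op (\<lambda>x::'a::complex_inner. x)"
  by (simp add: positive_op_def bclin_id cinner_self_real cinner_self_nonneg)

lemma expand_sum:
  assumes "bounded_clinear_op A"
  shows "cinner (A (x + y)) (x + y) = cinner (A x) x + cinner (A x) y + cinner (A y) x + cinner (A y) y"
  using assms by (simp add: bclin_add cinner_add_left cinner_add_right)

lemma pos_herm:
  assumes A: "positive_op A"
  shows "cinner (A y) x = cnj (cinner (A x) y)"
proof -
  have B: "bounded_clinear_op A" using A by (rule pos_bclin)
  define a where "a = cinner (A x) y"
  define b where "b = cinner (A y) x"
  have "cinner (A (x + y)) (x + y) = cinner (A x) x + (a + b) + cinner (A y) y"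
    using expand_sum[OF B] by (simp add: a_def b_def)
  then have r1: "a + b \<in> \<real>"
    using pos_real[OF A, of "x+y"] pos_real[OF A, of x] pos_real[OF A, of y]
    by (metis Reals_diff add_diff_cancel_left' add_diff_cancel_right')
  have e2: "cinner (A (x + \<i> *\<^sub>C y)) (x + \<i> *\<^sub>C y) = cinner (A x) x + (- \<i> * a + \<i> * b) + cinner (A y) y"
    using expand_sum[OF B, of x "\<i> *\<^sub>C y"]
    by (simp add: a_def b_def bclin_scaleC[OF B] cinner_scaleC_left cinner_scaleC_right algebra_simps)
  then have r2: "- \<i> * a + \<i> * b \<in> \<real>"
    using pos_real[OF A, of "x + \<i> *\<^sub>C y"] pos_real[OF A, of x] pos_real[OF A, of y]
    by (metis Reals_diff add_diff_cancel_left' add_diff_cancel_right')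
  from r1 r2 have "Im a + Im b = 0" "Re b - Re a = 0"
    by (auto simp: complex_is_Real_iff)
  then have "b = cnj a" by (simp add: complex_eq_iff)
  then show ?thesis by (simp add: a_def b_def)
qed

lemma pos_selfadj:
  assumes A: "positive_op A"
  shows "cinner (A x) y = cinner x (A y)"
  by (metis A cinner_commute pos_herm)

lemma pos_expand_Re:
  assumes A: "positive_op A"
  shows "Re (cinner (A (u + v)) (u + v)) = Re (cinner (A u) u) + 2 * Re (cinner (A u) v) + Re (cinner (A v) v)"
proof -
  have "Re (cinner (A v) u) = Re (cinner (A u) v)" using pos_herm[OF A, of v u] by simp
  then show ?thesis using expand_sum[OF pos_bclin[OF A], of u v] by simp
qed

lemma pos_scaleR_Re:
  assumes A: "positive_op A"
  shows "Re (cinner (A (t *\<^sub>R v)) (t *\<^sub>R v)) = t\<^sup>2 * Re (cinner (A v) v)"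
  using bclin_scaleR[OF pos_bclin[OF A]]
  by (simp add: cinner_scaleR_left cinner_scaleR_right power2_eq_square)

lemma quad_zero:
  fixes c d :: real
  assumes h: "\<forall>t. 0 \<le> 2 * t * c + t\<^sup>2 * d" and d: "0 \<le> d"
  shows "c = 0"
proof (rule ccontr)
  assume c: "c \<noteq> 0"
  define t where "t = - c / (d + 1)"
  have dp: "0 < d + 1" using d by simp
  have "0 \<le> 2 * t * c + t\<^sup>2 * d" using h by simp
  then have "0 \<le> (2 * t * c + t\<^sup>2 * d) * (d + 1)\<^sup>2" using dp by simp
  also have "(2 * t * c + t\<^sup>2 * d) * (d + 1)\<^sup>2 = - (c\<^sup>2 * (d + 2))"
  proof -
    have e1: "t * (d + 1) = - c" using dp unfolding t_def by simp
    have "(2 * t * c + t\<^sup>2 * d) * (d + 1)\<^sup>2 = 2 * c * (t * (d + 1)) * (d + 1) + (t * (d + 1))\<^sup>2 * d"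
      by (simp add: algebra_simps power2_eq_square)
    also have "\<dots> = - (c\<^sup>2 * (d + 2))" unfolding e1 by (simp add: algebra_simps power2_eq_square)
    finally show ?thesis .
  qed
  finally have "c\<^sup>2 * (d + 2) \<le> 0" by simp
  moreover have "0 < c\<^sup>2 * (d + 2)" using c d by simp
  ultimately show False by simp
qed

lemma min_orth:
  assumes A: "positive_op A"
    and h1: "\<forall>t::real. Re (cinner (A u) u) \<le> Re (cinner (A (u + t *\<^sub>R v)) (u + t *\<^sub>R v))"
    and h2: "\<forall>t::real. Re (cinner (A u) u) \<le> Re (cinner (A (u + t *\<^sub>R (\<i> *\<^sub>C v))) (u + t *\<^sub>R (\<i> *\<^sub>C v)))"
  shows "cinner (A u) v = 0"
proof -
  have B: "bounded_clinear_op A" using A by (rule pos_bclin)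
  have fv: "0 \<le> Re (cinner (A v) v)" using pos_nonneg[OF A] .
  have "\<forall>t::real. 0 \<le> 2 * t * Re (cinner (A u) v) + t\<^sup>2 * Re (cinner (A v) v)"
  proof
    fix t :: real
    show "0 \<le> 2 * t * Re (cinner (A u) v) + t\<^sup>2 * Re (cinner (A v) v)"
      using h1[rule_format, of t] pos_expand_Re[OF A, of u "t *\<^sub>R v"] pos_scaleR_Re[OF A, of t v]
      by (simp add: cinner_scaleR_right)
  qed
  then have re: "Re (cinner (A u) v) = 0" using quad_zero fv by blast
  have iv: "Re (cinner (A (\<i> *\<^sub>C v)) (\<i> *\<^sub>C v)) = Re (cinner (A v) v)"
    by (simp add: bclin_scaleC[OF B] cinner_scaleC_left cinner_scaleC_right)
  have iu: "Re (cinner (A u) (\<i> *\<^sub>C v)) = Im (cinner (A u) v)"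
    by (simp add: cinner_scaleC_right)
  have "\<forall>t::real. 0 \<le> 2 * t * Im (cinner (A u) v) + t\<^sup>2 * Re (cinner (A v) v)"
  proof
    fix t :: real
    show "0 \<le> 2 * t * Im (cinner (A u) v) + t\<^sup>2 * Re (cinner (A v) v)"
      using h2[rule_format, of t] pos_expand_Re[OF A, of u "t *\<^sub>R (\<i> *\<^sub>C v)"]
        pos_scaleR_Re[OF A, of t "\<i> *\<^sub>C v"] iv iu
      by (simp add: cinner_scaleR_right)
  qed
  then have im: "Im (cinner (A u) v) = 0" using quad_zero fv by blast
  from re im show ?thesis by (simp add: complex_eq_iff)
qed

lemma pos_null:
  assumes A: "positive_op A" and d: "Re (cinner (A d) d) = 0"
  shows "A d = 0"
proof -
  have "cinner (A d) w = 0" for w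
    by (rule min_orth[OF A]) (auto simp: d pos_nonneg[OF A])
  then have "cinner (A d) (A d) = 0" by blast
  then show ?thesis by (simp add: cinner_self_eq_0)
qed

lemma seminormA_le_iff:
  assumes A: "positive_op A"
  shows "seminormA A u \<le> seminormA A v \<longleftrightarrow> Re (cinner (A u) u) \<le> Re (cinner (A v) v)"
  unfolding seminormA_def using pos_nonneg[OF A] by simp

lemma norm_scaleC: "norm (c *\<^sub>C (y::'a::complex_inner)) = cmod c * norm y"
proof -
  have "(norm (c *\<^sub>C y))\<^sup>2 = Re (cinner (c *\<^sub>C y) (c *\<^sub>C y))" by (simp add: Re_cinner_self)
  also have "\<dots> = Re (c * cnj c * cinner y y)" by (simp add: cinner_scaleC_left cinner_scaleC_right algebra_simps)
  also have "\<dots> = (cmod c)\<^sup>2 * (norm y)\<^sup>2"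
    by (simp add: cinner_self_of_real complex_mult_cnj mult.commute cmod_power2 flip: of_real_mult)
  finally have "(norm (c *\<^sub>C y))\<^sup>2 = (cmod c * norm y)\<^sup>2" by (simp add: power_mult_distrib)
  then show ?thesis by (simp add: power2_eq_iff_nonneg)
qed

lemma cauchy_schwarz: "cmod (cinner x y) \<le> norm x * norm (y::'a::complex_inner)"
proof (cases "y = 0")
  case True then show ?thesis by simp
next
  case False
  define a where "a = cinner x y"
  define n where "n = (norm y)\<^sup>2"
  have np: "0 < n" using False by (simp add: n_def)
  define t where "t = 1 / n"
  define v where "v = (- t) *\<^sub>R (a *\<^sub>C y)"
  have "0 \<le> Re (cinner (x + v) (x + v))" by (rule cinner_self_nonneg)
  also have "\<dots> = Re (cinner x x) + 2 * Re (cinner x v) + Re (cinner v v)"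
    using pos_expand_Re[OF pos_id, of x v] by simp
  also have "Re (cinner x v) = - t * (cmod a)\<^sup>2"
    by (simp add: v_def cinner_scaleR_right cinner_minus_right cinner_scaleC_right a_def complex_mult_cnj
        cinner_commute[of y x] cmod_power2)
       (simp add: power2_eq_square)
  also have "Re (cinner v v) = t\<^sup>2 * (cmod a)\<^sup>2 * n"
    by (simp add: Re_cinner_self v_def norm_scaleC n_def power_mult_distrib)
  finally have "0 \<le> (norm x)\<^sup>2 - 2 * t * (cmod a)\<^sup>2 + t\<^sup>2 * (cmod a)\<^sup>2 * n"
    by (simp add: Re_cinner_self)
  also have "t\<^sup>2 * (cmod a)\<^sup>2 * n = t * (cmod a)\<^sup>2"
    using np by (simp add: t_def power2_eq_square)
  finally have "(cmod a)\<^sup>2 / n \<le> (norm x)\<^sup>2" by (simp add: t_def)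
  then have "(cmod a)\<^sup>2 \<le> (norm x)\<^sup>2 * n" using np by (simp add: divide_le_eq)
  then have "(cmod a)\<^sup>2 \<le> (norm x * norm y)\<^sup>2" by (simp add: n_def power_mult_distrib)
  then show ?thesis unfolding a_def
    using power2_le_imp_le by (metis mult_nonneg_nonneg norm_ge_zero)
qed

section \<open>Closed subspaces and orthogonal projections\<close>

lemma csub_closed: "closed_csubspace M \<Longrightarrow> closed M" by (simp add: closed_csubspace_def)
lemma csub_0: "closed_csubspace M \<Longrightarrow> 0 \<in> M" by (simp add: closed_csubspace_def)
lemma csub_add: "closed_csubspace M \<Longrightarrow> x \<in> M \<Longrightarrow> y \<in> M \<Longrightarrow> x + y \<in> M"
  by (simp add: closed_csubspace_def)
lemma csub_scaleC: "closed_csubspace M \<Longrightarrow> x \<in> M \<Longrightarrow> c *\<^sub>C x \<in> M"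
  by (simp add: closed_csubspace_def)
lemma csub_scaleR: "closed_csubspace M \<Longrightarrow> x \<in> M \<Longrightarrow> r *\<^sub>R x \<in> M"
  by (simp add: closed_csubspace_def scaleR_scaleC)
lemma csub_minus: "closed_csubspace M \<Longrightarrow> x \<in> M \<Longrightarrow> - x \<in> M"
  using csub_scaleC[of M x "-1"] by (simp add: scaleC_minus_one)
lemma csub_diff: "closed_csubspace M \<Longrightarrow> x \<in> M \<Longrightarrow> y \<in> M \<Longrightarrow> x - y \<in> M"
  using csub_add csub_minus by (metis diff_conv_add_uminus)

lemma parallelogram:
  "(norm (a + b))\<^sup>2 + (norm (a - b))\<^sup>2 = 2 * (norm a)\<^sup>2 + 2 * (norm (b::'a::complex_inner))\<^sup>2"
proof -
  have "(norm (a + b))\<^sup>2 = (norm a)\<^sup>2 + 2 * Re (cinner a b) + (norm b)\<^sup>2"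
    using pos_expand_Re[OF pos_id, of a b] by (simp add: Re_cinner_self)
  moreover have "(norm (a + (- b)))\<^sup>2 = (norm a)\<^sup>2 + 2 * Re (cinner a (- b)) + (norm (- b))\<^sup>2"
    using pos_expand_Re[OF pos_id, of a "- b"] by (simp add: Re_cinner_self)
  ultimately show ?thesis by (simp add: cinner_minus_right)
qed

lemma nearest_exists:
  fixes x :: "'a::{complex_inner,complete_space}"
  assumes M: "closed_csubspace M"
  shows "\<exists>m\<in>M. \<forall>m'\<in>M. norm (x - m) \<le> norm (x - m')"
proof -
  define D where "D = (\<lambda>m. norm (x - m)) ` M"
  define \<delta> where "\<delta> = Inf D"
  have Dne: "D \<noteq> {}" using csub_0[OF M] by (auto simp: D_def)
  have bdd: "bdd_below D" by (auto simp: D_def intro!: bdd_belowI[of _ 0])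
  have low: "\<delta> \<le> norm (x - m)" if "m \<in> M" for m
    unfolding \<delta>_def using that bdd by (auto simp: D_def intro!: cInf_lower)
  have d0: "0 \<le> \<delta>" unfolding \<delta>_def using Dne by (auto simp: D_def intro!: cInf_greatest)
  have ex: "\<exists>m\<in>M. (norm (x - m))\<^sup>2 < \<delta>\<^sup>2 + inverse (real (Suc n))" for n
  proof -
    define e where "e = sqrt (\<delta>\<^sup>2 + inverse (real (Suc n)))"
    have "\<delta> < e" unfolding e_def using d0
      by (metis add.right_neutral add_less_cancel_left inverse_positive_iff_positive of_nat_0_less_iff
          real_less_rsqrt zero_less_Suc)
    then have "Inf D < e" by (simp add: \<delta>_def)
    then obtain r where "r \<in> D" "r < e" using cInf_lessD[OF Dne] by blast
    then obtain m where m: "m \<in> M" "norm (x - m) < e" by (auto simp: D_def)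
    have "(norm (x - m))\<^sup>2 < e\<^sup>2" using m(2) by (simp add: power_strict_mono)
    also have "e\<^sup>2 = \<delta>\<^sup>2 + inverse (real (Suc n))" unfolding e_def by simp
    finally show ?thesis using m(1) by blast
  qed
  then obtain s where s: "\<And>n. s n \<in> M" "\<And>n. (norm (x - s n))\<^sup>2 < \<delta>\<^sup>2 + inverse (real (Suc n))"
    by metis
  have pd: "(norm (s n - s k))\<^sup>2 \<le> 2 * inverse (real (Suc n)) + 2 * inverse (real (Suc k))" for n k
  proof -
    define mid where "mid = (1/2::real) *\<^sub>R (s n + s k)"
    have "mid \<in> M" unfolding mid_def using s(1) M by (simp add: csub_add csub_scaleR)
    then have "\<delta> \<le> norm (x - mid)" by (rule low)
    then have "\<delta>\<^sup>2 \<le> (norm (x - mid))\<^sup>2" using d0 by (simp add: power_mono)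
    have "(x - s n) + (x - s k) = 2 *\<^sub>R (x - mid)" unfolding mid_def
      by (simp add: algebra_simps scaleR_2)
    then have "(norm ((x - s n) + (x - s k)))\<^sup>2 = 4 * (norm (x - mid))\<^sup>2"
      by (simp add: power2_eq_square)
    moreover have "(x - s n) - (x - s k) = s k - s n" by simp
    moreover have "norm (s k - s n) = norm (s n - s k)" by (rule norm_minus_commute)
    ultimately have "4 * (norm (x - mid))\<^sup>2 + (norm (s n - s k))\<^sup>2
        = 2 * (norm (x - s n))\<^sup>2 + 2 * (norm (x - s k))\<^sup>2"
      using parallelogram[of "x - s n" "x - s k"] by simp
    then show ?thesis using s(2)[of n] s(2)[of k] \<open>\<delta>\<^sup>2 \<le> (norm (x - mid))\<^sup>2\<close> by linarith
  qed
  have "Cauchy s"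
  proof (rule metric_CauchyI)
    fix e :: real assume e: "0 < e"
    obtain N :: nat where N: "4 / e\<^sup>2 < real N" using reals_Archimedean2 by blast
    have "\<forall>m\<ge>N. \<forall>n\<ge>N. dist (s m) (s n) < e"
    proof (intro allI impI)
      fix m n assume mn: "N \<le> m" "N \<le> n"
      have i1: "inverse (real (Suc m)) \<le> inverse (real (Suc N))" using mn
        by (simp add: le_imp_inverse_le)
      have i2: "inverse (real (Suc n)) \<le> inverse (real (Suc N))" using mn
        by (simp add: le_imp_inverse_le)
      have "4 / e\<^sup>2 < real (Suc N)" using N by simp
      then have "4 < e\<^sup>2 * real (Suc N)" using e by (simp add: divide_less_eq mult.commute)
      then have "4 * inverse (real (Suc N)) < e\<^sup>2"
        by (simp add: field_simps)
      then have "(norm (s m - s n))\<^sup>2 < e\<^sup>2" using pd[of m n] i1 i2 by linarith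
      then show "dist (s m) (s n) < e" using e
        by (simp add: dist_norm power_less_imp_less_base)
    qed
    then show "\<exists>M. \<forall>m\<ge>M. \<forall>n\<ge>M. dist (s m) (s n) < e" by blast
  qed
  then obtain L where L: "s \<longlonglongrightarrow> L" using Cauchy_convergent convergent_def by blast
  have LM: "L \<in> M" using closed_sequentially[OF csub_closed[OF M]] s(1) L by blast
  have t1: "(\<lambda>n. (norm (x - s n))\<^sup>2) \<longlonglongrightarrow> (norm (x - L))\<^sup>2"
    by (intro tendsto_intros L)
  have t2: "(\<lambda>n. \<delta>\<^sup>2 + inverse (real (Suc n))) \<longlonglongrightarrow> \<delta>\<^sup>2 + 0"
    by (intro tendsto_intros LIMSEQ_inverse_real_of_nat)
  have "(norm (x - L))\<^sup>2 \<le> \<delta>\<^sup>2 + 0"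
    by (rule LIMSEQ_le[OF t1 t2]) (metis less_imp_le s(2))
  then have "norm (x - L) \<le> \<delta>" using d0 by (simp add: power2_le_iff_abs_le)
  then show ?thesis using LM low by (meson order_trans)
qed

definition proj :: "'a::complex_inner set \<Rightarrow> 'a \<Rightarrow> 'a" where
  "proj M x = (SOME m. m \<in> M \<and> (\<forall>v\<in>M. cinner (x - m) v = 0))"

lemma proj_exists:
  fixes x :: "'a::{complex_inner,complete_space}"
  assumes M: "closed_csubspace M"
  shows "\<exists>m\<in>M. \<forall>v\<in>M. cinner (x - m) v = 0"
proof -
  obtain m where m: "m \<in> M" "\<And>m'. m' \<in> M \<Longrightarrow> norm (x - m) \<le> norm (x - m')"
    using nearest_exists[OF M, of x] by blast
  have "cinner (x - m) v = 0" if v: "v \<in> M" for v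
  proof -
    have key: "Re (cinner (x - m) (x - m)) \<le> Re (cinner (x - m + w) (x - m + w))" if "w \<in> M" for w
    proof -
      have "m - w \<in> M" using csub_diff[OF M m(1) that] .
      then have "norm (x - m) \<le> norm (x - (m - w))" by (rule m(2))
      then have "(norm (x - m))\<^sup>2 \<le> (norm (x - (m - w)))\<^sup>2" by (simp add: power_mono)
      moreover have "x - (m - w) = x - m + w" by simp
      ultimately show ?thesis by (simp add: Re_cinner_self)
    qed
    have "cinner ((\<lambda>x. x) (x - m)) v = 0"
    proof (rule min_orth[OF pos_id])
      show "\<forall>t::real. Re (cinner (x - m) (x - m)) \<le> Re (cinner (x - m + t *\<^sub>R v) (x - m + t *\<^sub>R v))"
        using key csub_scaleR[OF M v] by blast
      show "\<forall>t::real. Re (cinner (x - m) (x - m)) \<le> Re (cinner (x - m + t *\<^sub>R (\<i> *\<^sub>C v)) (x - m + t *\<^sub>R (\<i> *\<^sub>C v)))"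
        using key csub_scaleR[OF M csub_scaleC[OF M v]] by blast
    qed
    then show ?thesis by simp
  qed
  then show ?thesis using m(1) by blast
qed

lemma proj_in:
  fixes x :: "'a::{complex_inner,complete_space}"
  assumes "closed_csubspace M" shows "proj M x \<in> M"
  using someI_ex[OF proj_exists[OF assms, of x, unfolded Bex_def]] unfolding proj_def by blast

lemma proj_orth:
  fixes x :: "'a::{complex_inner,complete_space}"
  assumes "closed_csubspace M" "v \<in> M" shows "cinner (x - proj M x) v = 0"
  using someI_ex[OF proj_exists[OF assms(1), of x, unfolded Bex_def]] assms(2) unfolding proj_def by blast

lemma proj_unique:
  fixes x :: "'a::{complex_inner,complete_space}"
  assumes M: "closed_csubspace M" and m: "m \<in> M" and o: "\<And>v. v \<in> M \<Longrightarrow> cinner (x - m) v = 0"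
  shows "proj M x = m"
proof -
  define p where "p = proj M x"
  have pm: "p - m \<in> M" using csub_diff[OF M proj_in[OF M] m] by (simp add: p_def)
  have "cinner (p - m) (p - m) = cinner ((x - m) - (x - p)) (p - m)" by simp
  also have "\<dots> = cinner (x - m) (p - m) - cinner (x - p) (p - m)" by (rule cinner_diff_left)
  also have "\<dots> = 0" using o[OF pm] proj_orth[OF M pm, of x] by (simp add: p_def)
  finally show ?thesis by (simp add: cinner_self_eq_0 p_def)
qed

lemma proj_fix:
  fixes m :: "'a::{complex_inner,complete_space}"
  assumes M: "closed_csubspace M" and m: "m \<in> M"
  shows "proj M m = m"
  by (rule proj_unique[OF M m]) simp

lemma proj_add:
  fixes x :: "'a::{complex_inner,complete_space}"
  assumes M: "closed_csubspace M"
  shows "proj M (x + y) = proj M x + proj M y"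
proof (rule proj_unique[OF M])
  show "proj M x + proj M y \<in> M" using csub_add[OF M proj_in[OF M] proj_in[OF M]] .
  fix v assume v: "v \<in> M"
  have "x + y - (proj M x + proj M y) = (x - proj M x) + (y - proj M y)" by simp
  then show "cinner (x + y - (proj M x + proj M y)) v = 0"
    using proj_orth[OF M v, of x] proj_orth[OF M v, of y] by (simp only: cinner_add_left) simp
qed

lemma proj_scaleC:
  fixes x :: "'a::{complex_inner,complete_space}"
  assumes M: "closed_csubspace M"
  shows "proj M (c *\<^sub>C x) = c *\<^sub>C proj M x"
proof (rule proj_unique[OF M])
  show "c *\<^sub>C proj M x \<in> M" using csub_scaleC[OF M proj_in[OF M]] .
  fix v assume v: "v \<in> M"
  have "c *\<^sub>C x - c *\<^sub>C proj M x = c *\<^sub>C (x - proj M x)" by (simp add: scaleC_diff_right)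
  then show "cinner (c *\<^sub>C x - c *\<^sub>C proj M x) v = 0"
    using proj_orth[OF M v, of x] by (simp add: cinner_scaleC_left)
qed

lemma proj_pythag:
  fixes x :: "'a::{complex_inner,complete_space}"
  assumes M: "closed_csubspace M"
  shows "(norm x)\<^sup>2 = (norm (proj M x))\<^sup>2 + (norm (x - proj M x))\<^sup>2"
proof -
  define p where "p = proj M x"
  have o: "cinner p (x - p) = 0"
    using proj_orth[OF M proj_in[OF M], of x] cinner_commute[of p "x - p"] by (simp add: p_def)
  have "x = p + (x - p)" by simp
  then have "(norm x)\<^sup>2 = Re (cinner (p + (x - p)) (p + (x - p)))" by (metis Re_cinner_self)
  also have "\<dots> = (norm p)\<^sup>2 + (norm (x - p))\<^sup>2"
    using pos_expand_Re[OF pos_id, of p "x - p"] o by (simp add: Re_cinner_self)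
  finally show ?thesis by (simp add: p_def)
qed

lemma proj_bclin:
  fixes M :: "'a::{complex_inner,complete_space} set"
  assumes M: "closed_csubspace M"
  shows "bounded_clinear_op (proj M)"
  unfolding bounded_clinear_op_def
proof (intro conjI allI exI)
  show "proj M (x + y) = proj M x + proj M y" for x y by (rule proj_add[OF M])
  show "proj M (c *\<^sub>C x) = c *\<^sub>C proj M x" for c x by (rule proj_scaleC[OF M])
  show "norm (proj M x) \<le> norm x * 1" for x
  proof -
    have "(norm (proj M x))\<^sup>2 \<le> (norm x)\<^sup>2" using proj_pythag[OF M, of x] by simp
    then show ?thesis using power2_le_imp_le by simp
  qed
qed

section \<open>Riesz representation and adjoints\<close>

lemma riesz:
  fixes \<phi> :: "'a::{complex_inner,complete_space} \<Rightarrow> complex"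
  assumes add: "\<And>x y. \<phi> (x + y) = \<phi> x + \<phi> y"
    and scal: "\<And>c x. \<phi> (c *\<^sub>C x) = c * \<phi> x"
    and bnd: "\<And>x. cmod (\<phi> x) \<le> norm x * K"
  shows "\<exists>z. \<forall>x. \<phi> x = cinner x z"
proof -
  have bl: "bounded_linear \<phi>"
  proof
    show "\<phi> (x + y) = \<phi> x + \<phi> y" for x y by (rule add)
    show "\<phi> (r *\<^sub>R x) = r *\<^sub>R \<phi> x" for r x
      by (simp add: scaleR_scaleC scal scaleR_conv_of_real)
    show "\<exists>K. \<forall>x. norm (\<phi> x) \<le> norm x * K" using bnd by auto
  qed
  define Kr where "Kr = {x. \<phi> x = 0}"
  have cl: "closed Kr" unfolding Kr_def
    by (rule closed_Collect_eq[OF bounded_linear.continuous_on[OF bl continuous_on_id] continuous_on_const])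
  have Ksub: "closed_csubspace Kr" unfolding closed_csubspace_def Kr_def
    using cl add scal bounded_linear.linear[OF bl] real_vector.linear_0 by (auto simp: Kr_def)
  show ?thesis
  proof (cases "\<forall>x. \<phi> x = 0")
    case True then show ?thesis by (auto intro: exI[of _ 0])
  next
    case False
    then obtain x0 where x0: "\<phi> x0 \<noteq> 0" by blast
    define w where "w = x0 - proj Kr x0"
    have "\<phi> (proj Kr x0) = 0" using proj_in[OF Ksub, of x0] by (simp add: Kr_def)
    then have pw: "\<phi> w = \<phi> x0" unfolding w_def
      using real_vector.linear_diff[OF bounded_linear.linear[OF bl]] by simp
    then have w0: "w \<noteq> 0" using x0 real_vector.linear_0[OF bounded_linear.linear[OF bl]] by auto
    then have ww: "cinner w w \<noteq> 0" by (simp add: cinner_self_eq_0)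
    have key: "\<phi> x * cinner w w = \<phi> w * cinner x w" for x
    proof -
      define k where "k = \<phi> x *\<^sub>C w - \<phi> w *\<^sub>C x"
      have "\<phi> k = 0" unfolding k_def
        using real_vector.linear_diff[OF bounded_linear.linear[OF bl]] by (simp add: scal)
      then have "k \<in> Kr" by (simp add: Kr_def)
      then have "cinner w k = 0" using proj_orth[OF Ksub, of k x0] by (simp add: w_def)
      then have "cinner k w = 0" using cinner_commute[of k w] by simp
      then show ?thesis unfolding k_def by (simp add: cinner_diff_left cinner_scaleC_left)
    qed
    define z where "z = cnj (\<phi> w / cinner w w) *\<^sub>C w"
    have "\<phi> x = cinner x z" for x
      using key[of x] ww by (simp add: z_def cinner_scaleC_right field_simps)
    then show ?thesis by blast
  qed
qed

lemma adjoint_exists: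
  fixes T :: "'a::{complex_inner,complete_space} \<Rightarrow> 'a"
  assumes T: "bounded_clinear_op T"
  shows "\<exists>Ts. is_adjoint T Ts"
proof -
  obtain K where K: "\<And>x. norm (T x) \<le> norm x * K" using T by (auto simp: bounded_clinear_op_def)
  have "\<forall>y. \<exists>z. \<forall>x. cinner (T x) y = cinner x z"
  proof
    fix y
    show "\<exists>z. \<forall>x. cinner (T x) y = cinner x z"
    proof (rule riesz)
      show "cinner (T (x + x')) y = cinner (T x) y + cinner (T x') y" for x x'
        by (simp add: bclin_add[OF T] cinner_add_left)
      show "cinner (T (c *\<^sub>C x)) y = c * cinner (T x) y" for c x
        by (simp add: bclin_scaleC[OF T] cinner_scaleC_left)
      show "cmod (cinner (T x) y) \<le> norm x * (K * norm y)" for x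
      proof -
        have "cmod (cinner (T x) y) \<le> norm (T x) * norm y" by (rule cauchy_schwarz)
        also have "\<dots> \<le> norm x * K * norm y" using K[of x] by (simp add: mult_right_mono)
        finally show ?thesis by (simp add: mult.assoc)
      qed
    qed
  qed
  then obtain Ts where "\<forall>y x. cinner (T x) y = cinner x (Ts y)" by metis
  then show ?thesis by (auto simp: is_adjoint_def)
qed

section \<open>Compatibility from an A-orthogonal quasi-projection\<close>

lemma bclin_closed_kernel:
  fixes A :: "'a::complex_inner \<Rightarrow> 'a"
  assumes "bounded_clinear_op A"
  shows "closed {x. A x = 0}"
  by (rule closed_Collect_eq[OF bounded_linear.continuous_on[OF bclin_bounded_linear[OF assms] continuous_on_id] continuous_on_const])

lemma compat_from_Q:
  fixes A Q :: "'a::{complex_inner,complete_space} \<Rightarrow> 'a"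
  assumes A: "positive_op A" and S: "closed_csubspace S" and Q: "bounded_clinear_op Q"
    and QS: "\<And>y. Q y \<in> S" and orth: "\<And>y s. s \<in> S \<Longrightarrow> cinner (A (y - Q y)) s = 0"
  shows "compatible A S"
proof -
  have BA: "bounded_clinear_op A" using A by (rule pos_bclin)
  define N0 where "N0 = {x. x \<in> S \<and> A x = 0}"
  have N0: "closed_csubspace N0"
  proof -
    have "N0 = S \<inter> {x. A x = 0}" by (auto simp: N0_def)
    then have "closed N0" using csub_closed[OF S] bclin_closed_kernel[OF BA] by auto
    then show ?thesis unfolding closed_csubspace_def N0_def
      using S by (auto simp: csub_0 csub_add csub_scaleC bclin_zero[OF BA] bclin_add[OF BA] bclin_scaleC[OF BA])
  qed
  define P0 where "P0 = proj N0"
  have P0: "bounded_clinear_op P0" unfolding P0_def by (rule proj_bclin[OF N0])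
  have P0in: "P0 x \<in> N0" for x unfolding P0_def by (rule proj_in[OF N0])
  define E where "E = (\<lambda>y. Q y + P0 (y - Q y))"
  have E: "bounded_clinear_op E" unfolding E_def
    by (intro bclin_add_op Q bclin_comp[OF P0] bclin_diff_op bclin_id)
  have ES: "E y \<in> S" for y
    using csub_add[OF S QS] P0in by (auto simp: E_def N0_def)
  have Efix: "E s = s" if s: "s \<in> S" for s
  proof -
    define d where "d = s - Q s"
    have dS: "d \<in> S" unfolding d_def using csub_diff[OF S s QS] .
    have "cinner (A d) d = 0" using orth[OF dS, of s] by (simp add: d_def)
    then have "A d = 0" using pos_null[OF A, of d] by simp
    then have "d \<in> N0" using dS by (simp add: N0_def)
    then have "P0 d = d" unfolding P0_def by (rule proj_fix[OF N0])
    then show ?thesis by (simp add: E_def d_def)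
  qed
  have EE: "E \<circ> E = E" using Efix ES by (auto simp: fun_eq_iff)
  have rE: "range E = S"
  proof
    show "range E \<subseteq> S" using ES by auto
    show "S \<subseteq> range E" using Efix by (metis rangeI subsetI)
  qed
  obtain Es where Es: "is_adjoint E Es" using adjoint_exists[OF E] by blast
  have AE: "A (E x) = A (Q x)" for x
  proof -
    have "A (P0 (x - Q x)) = 0" using P0in by (simp add: N0_def)
    then show ?thesis by (simp add: E_def bclin_add[OF BA])
  qed
  have c1: "cinner (A (Q x)) y = cinner (A (Q x)) (Q y)" for x y
  proof -
    have "cinner (A (Q x)) (y - Q y) = cinner (Q x) (A (y - Q y))" by (rule pos_selfadj[OF A])
    also have "\<dots> = cnj (cinner (A (y - Q y)) (Q x))" by (rule cinner_commute)
    also have "\<dots> = 0" using orth[OF QS] by simp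
    finally show ?thesis by (simp add: cinner_diff_right)
  qed
  have c2: "cinner x (A (Q y)) = cinner (A (Q x)) (Q y)" for x y
  proof -
    have "cinner x (A (Q y)) = cinner (A x) (Q y)" by (rule pos_selfadj[OF A, symmetric])
    also have "\<dots> = cinner (A (Q x) + A (x - Q x)) (Q y)" by (simp add: bclin_diff[OF BA])
    also have "\<dots> = cinner (A (Q x)) (Q y)" using orth[OF QS, of x y] by (simp add: cinner_add_left)
    finally show ?thesis .
  qed
  have "A (E y) = Es (A y)" for y
  proof -
    have "cinner x (Es (A y) - A (E y)) = 0" for x
    proof -
      have "cinner x (Es (A y)) = cinner (E x) (A y)" using Es by (simp add: is_adjoint_def)
      also have "\<dots> = cinner (A (E x)) y" by (rule pos_selfadj[OF A, symmetric])
      also have "\<dots> = cinner x (A (E y))" unfolding AE by (simp only: c1[of x y] c2[of x y])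
      finally show ?thesis by (simp add: cinner_diff_right)
    qed
    then have "cinner (Es (A y) - A (E y)) (Es (A y) - A (E y)) = 0" by blast
    then show ?thesis by (simp add: cinner_self_eq_0)
  qed
  then have "A \<circ> E = Es \<circ> A" by (simp add: fun_eq_iff)
  then show ?thesis unfolding compatible_def using A S E EE rE Es by blast
qed




lemma kernel_csub:
  fixes T :: "'a::complex_inner \<Rightarrow> 'a"
  assumes T: "bounded_clinear_op T"
  shows "closed_csubspace {x. T x = 0}"
  unfolding closed_csubspace_def
  using bclin_closed_kernel[OF T] by (simp add: bclin_zero[OF T] bclin_add[OF T] bclin_scaleC[OF T])

lemma range_csub:
  fixes B :: "'a::complex_inner \<Rightarrow> 'a"
  assumes B: "bounded_clinear_op B" and cl: "closed (range B)"
  shows "closed_csubspace (range B)"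
  unfolding closed_csubspace_def
proof (intro conjI ballI allI cl)
  show "0 \<in> range B" using bclin_zero[OF B] by (metis rangeI)
  fix x y assume "x \<in> range B" "y \<in> range B"
  then obtain a b where "x = B a" "y = B b" by blast
  then show "x + y \<in> range B" using bclin_add[OF B, of a b] by (metis rangeI)
next
  fix c x assume "x \<in> range B"
  then obtain a where "x = B a" by blast
  then show "c *\<^sub>C x \<in> range B" using bclin_scaleC[OF B, of c a] by (metis rangeI)
qed

lemma LSS_iff:
  assumes A: "positive_op A" and B: "bounded_clinear_op B"
  shows "is_A_LSS A B y x0 \<longleftrightarrow> (\<forall>w. cinner (A (y - B x0)) (B w) = 0)"
proof
  assume L: "is_A_LSS A B y x0"
  have L': "Re (cinner (A (y - B x0)) (y - B x0)) \<le> Re (cinner (A (y - B x)) (y - B x))" for x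
    using L by (simp add: is_A_LSS_def seminormA_le_iff[OF A])
  show "\<forall>w. cinner (A (y - B x0)) (B w) = 0"
  proof
    fix w
    show "cinner (A (y - B x0)) (B w) = 0"
    proof (rule min_orth[OF A])
      show "\<forall>t::real. Re (cinner (A (y - B x0)) (y - B x0))
          \<le> Re (cinner (A (y - B x0 + t *\<^sub>R B w)) (y - B x0 + t *\<^sub>R B w))"
      proof
        fix t :: real
        have eq: "y - B (x0 - t *\<^sub>R w) = y - B x0 + t *\<^sub>R B w"
          by (simp add: bclin_diff[OF B] bclin_scaleR[OF B])
        show "Re (cinner (A (y - B x0)) (y - B x0))
          \<le> Re (cinner (A (y - B x0 + t *\<^sub>R B w)) (y - B x0 + t *\<^sub>R B w))"
          using L'[of "x0 - t *\<^sub>R w"] by (simp only: eq)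
      qed
      show "\<forall>t::real. Re (cinner (A (y - B x0)) (y - B x0))
          \<le> Re (cinner (A (y - B x0 + t *\<^sub>R (\<i> *\<^sub>C B w))) (y - B x0 + t *\<^sub>R (\<i> *\<^sub>C B w)))"
      proof
        fix t :: real
        have eq: "y - B (x0 - t *\<^sub>R (\<i> *\<^sub>C w)) = y - B x0 + t *\<^sub>R (\<i> *\<^sub>C B w)"
          by (simp add: bclin_diff[OF B] bclin_scaleR[OF B] bclin_scaleC[OF B])
        show "Re (cinner (A (y - B x0)) (y - B x0))
          \<le> Re (cinner (A (y - B x0 + t *\<^sub>R (\<i> *\<^sub>C B w))) (y - B x0 + t *\<^sub>R (\<i> *\<^sub>C B w)))"
          using L'[of "x0 - t *\<^sub>R (\<i> *\<^sub>C w)"] by (simp only: eq)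
      qed
    qed
  qed
next
  assume O: "\<forall>w. cinner (A (y - B x0)) (B w) = 0"
  show "is_A_LSS A B y x0"
    unfolding is_A_LSS_def seminormA_le_iff[OF A]
  proof
    fix x
    have e: "y - B x = (y - B x0) + B (x0 - x)" by (simp add: bclin_diff[OF B])
    show "Re (cinner (A (y - B x0)) (y - B x0)) \<le> Re (cinner (A (y - B x)) (y - B x))"
      unfolding e pos_expand_Re[OF A] using O pos_nonneg[OF A, of "B (x0 - x)"] by simp
  qed
qed

lemma fwd_compat1:
  fixes A1 A2 B G :: "'a::{complex_inner,complete_space} \<Rightarrow> 'a"
  assumes A1: "positive_op A1" and B: "bounded_clinear_op B" and cl: "closed (range B)"
    and G: "is_A_inverse A1 B G"
  shows "compatible A1 (range B)"
proof (rule compat_from_Q[OF A1 range_csub[OF B cl]])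
  have Gb: "bounded_clinear_op G" using G by (simp add: is_A_inverse_def)
  show "bounded_clinear_op (\<lambda>y. B (G y))" by (rule bclin_comp[OF B Gb])
  show "B (G y) \<in> range B" for y by simp
  fix y s assume "s \<in> range B"
  then obtain w where "s = B w" by blast
  moreover have "is_A_LSS A1 B y (G y)" using G by (simp add: is_A_inverse_def)
  ultimately show "cinner (A1 (y - B (G y))) s = 0" using LSS_iff[OF A1 B] by blast
qed

lemma LSS_shift:
  assumes A1: "positive_op A1" and B: "bounded_clinear_op B"
    and L: "is_A_LSS A1 B y x0" and n: "A1 (B n) = 0"
  shows "is_A_LSS A1 B y (x0 + n)"
proof -
  have BA: "bounded_clinear_op A1" using A1 by (rule pos_bclin)
  have "A1 (y - B (x0 + n)) = A1 (y - B x0)"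
    by (simp add: bclin_add[OF B] bclin_diff[OF BA] n diff_add_eq_diff_diff_swap)
  then show ?thesis using L LSS_iff[OF A1 B] by simp
qed

lemma fwd_compat2:
  fixes A1 A2 B G :: "'a::{complex_inner,complete_space} \<Rightarrow> 'a"
  assumes A1: "positive_op A1" and A2: "positive_op A2" and B: "bounded_clinear_op B"
    and G: "is_AA_inverse A1 A2 B G"
  shows "compatible A2 {x. A1 (B x) = 0}"
proof -
  have BA1: "bounded_clinear_op A1" using A1 by (rule pos_bclin)
  have GA: "is_A_inverse A1 B G" using G by (simp add: is_AA_inverse_def)
  have Gb: "bounded_clinear_op G" using GA by (simp add: is_A_inverse_def)
  have GL: "is_A_LSS A1 B y (G y)" for y using GA by (simp add: is_A_inverse_def)
  have Gmin: "seminormA A2 (G y) \<le> seminormA A2 x0" if "is_A_LSS A1 B y x0" for y x0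
    using G that by (simp add: is_AA_inverse_def)
  let ?N = "{x. A1 (B x) = 0}"
  have N: "closed_csubspace ?N" using kernel_csub[OF bclin_comp[OF BA1 B]] .
  show ?thesis
  proof (rule compat_from_Q[OF A2 N])
    show "bounded_clinear_op (\<lambda>x. x - G (B x))" by (intro bclin_diff_op bclin_id bclin_comp[OF Gb B])
    show "x - G (B x) \<in> ?N" for x
    proof -
      define d where "d = x - G (B x)"
      have "cinner (A1 (B x - B (G (B x)))) (B d) = 0" using GL[of "B x"] LSS_iff[OF A1 B] by blast
      moreover have "B x - B (G (B x)) = B d" by (simp add: d_def bclin_diff[OF B])
      ultimately have "cinner (A1 (B d)) (B d) = 0" by simp
      then have "A1 (B d) = 0" using pos_null[OF A1, of "B d"] by simp
      then show ?thesis by (simp add: d_def)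
    qed
    fix x n assume n: "n \<in> ?N"
    have key: "Re (cinner (A2 (G (B x))) (G (B x))) \<le> Re (cinner (A2 (G (B x) + m)) (G (B x) + m))"
      if m: "m \<in> ?N" for m
    proof -
      have "is_A_LSS A1 B (B x) (G (B x) + m)" using LSS_shift[OF A1 B GL] m by simp
      then show ?thesis using Gmin seminormA_le_iff[OF A2] by blast
    qed
    have "cinner (A2 (G (B x))) n = 0"
    proof (rule min_orth[OF A2])
      show "\<forall>t::real. Re (cinner (A2 (G (B x))) (G (B x))) \<le> Re (cinner (A2 (G (B x) + t *\<^sub>R n)) (G (B x) + t *\<^sub>R n))"
        using key csub_scaleR[OF N n] by blast
      show "\<forall>t::real. Re (cinner (A2 (G (B x))) (G (B x))) \<le> Re (cinner (A2 (G (B x) + t *\<^sub>R (\<i> *\<^sub>C n))) (G (B x) + t *\<^sub>R (\<i> *\<^sub>C n)))"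
        using key csub_scaleR[OF N csub_scaleC[OF N n]] by blast
    qed
    then show "cinner (A2 (x - (x - G (B x)))) n = 0" by simp
  qed
qed

section \<open>Open mapping (closed range) argument\<close>

lemma baire_step:
  fixes T :: "'a::{complex_inner,complete_space} \<Rightarrow> 'a"
  assumes bl: "bounded_linear T" and cl: "closed (range T)"
  shows "\<exists>n::nat. \<exists>\<epsilon>>0. \<exists>y0\<in>range T. \<forall>y\<in>range T. dist y y0 < \<epsilon> \<longrightarrow> y \<in> closure (T ` cball 0 (real n))"
proof -
  let ?Y = "range T"
  define F where "F n = ?Y \<inter> closure (T ` cball 0 (real n))" for n :: nat
  have ex: "\<exists>n. top_of_set ?Y interior_of F n \<noteq> {}"
  proof (rule ccontr)
    assume H: "\<not> (\<exists>n. top_of_set ?Y interior_of F n \<noteq> {})"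
    have "top_of_set ?Y interior_of \<Union>(range F) = {}"
    proof (rule Baire_category_alt)
      show "completely_metrizable_space (top_of_set ?Y) \<or> locally_compact_space (top_of_set ?Y) \<and> regular_space (top_of_set ?Y)"
      proof (rule disjI1)
        have "closedin euclidean ?Y" using closed_closedin[THEN iffD1, OF cl] .
        then show "completely_metrizable_space (top_of_set ?Y)"
          by (rule completely_metrizable_space_closedin[OF completely_metrizable_space_euclidean])
      qed
      show "countable (range F)" by simp
      fix S assume "S \<in> range F"
      then obtain n where "S = F n" by blast
      show "closedin (top_of_set ?Y) S \<and> top_of_set ?Y interior_of S = {}"
      proof
        show "closedin (top_of_set ?Y) S" unfolding \<open>S = F n\<close> F_def
          by (rule closedin_closed_Int) simp
        show "top_of_set ?Y interior_of S = {}" using H \<open>S = F n\<close> by blast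
      qed
    qed
    moreover have "\<Union>(range F) = ?Y"
    proof
      show "\<Union>(range F) \<subseteq> ?Y" by (auto simp: F_def)
      show "?Y \<subseteq> \<Union>(range F)"
      proof
        fix y assume "y \<in> ?Y"
        then obtain x where x: "y = T x" by blast
        obtain n :: nat where "norm x \<le> real n" using real_arch_simple by blast
        then have "y \<in> T ` cball 0 (real n)" using x by auto
        then have "y \<in> F n" using x closure_subset[of "T ` cball 0 (real n)"] by (auto simp: F_def)
        then show "y \<in> \<Union>(range F)" by blast
      qed
    qed
    ultimately have "?Y = {}" using interior_of_topspace[of "top_of_set ?Y"] by simp
    then show False by blast
  qed
  then obtain n where "top_of_set ?Y interior_of F n \<noteq> {}" by blast
  then obtain y0 U where U: "openin (top_of_set ?Y) U" "y0 \<in> U" "U \<subseteq> F n"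
    unfolding interior_of_def by blast
  then obtain e where e: "e > 0" "\<forall>y\<in>?Y. dist y y0 < e \<longrightarrow> y \<in> U"
    using openin_euclidean_subtopology_iff[of ?Y U] by blast
  have "y0 \<in> ?Y" using U(2,3) by (auto simp: F_def)
  moreover have "\<forall>y\<in>?Y. dist y y0 < e \<longrightarrow> y \<in> closure (T ` cball 0 (real n))"
    using e(2) U(3) by (auto simp: F_def)
  ultimately show ?thesis using e(1) by blast
qed


lemma approx_preimage:
  fixes T :: "'a::{complex_inner,complete_space} \<Rightarrow> 'a"
  assumes bl: "bounded_linear T" and cl: "closed (range T)"
  shows "\<exists>c\<ge>0. \<forall>y\<in>range T. \<forall>\<eta>>0. \<exists>x. norm x \<le> c * norm y \<and> norm (T x - y) < \<eta>"
proof -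
  have lin: "linear T" using bl by (rule bounded_linear.linear)
  obtain n :: nat and \<epsilon> y0 where \<epsilon>: "\<epsilon> > 0" and y0: "y0 \<in> range T"
    and B: "\<And>y. y \<in> range T \<Longrightarrow> dist y y0 < \<epsilon> \<Longrightarrow> y \<in> closure (T ` cball 0 (real n))"
    using baire_step[OF bl cl] by blast
  have small: "\<exists>x. norm x \<le> 2 * real n \<and> norm (T x - y) < \<eta>"
    if y: "y \<in> range T" "norm y < \<epsilon>" and \<eta>: "\<eta> > 0" for y \<eta>
  proof -
    obtain a0 where a0: "y0 = T a0" using y0 by blast
    obtain b0 where b0: "y = T b0" using y by blast
    have "y0 + y \<in> range T" using a0 b0 real_vector.linear_add[OF lin, of a0 b0] by (metis rangeI)
    moreover have "dist (y0 + y) y0 < \<epsilon>" using y by (simp add: dist_norm)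
    ultimately have c1: "y0 + y \<in> closure (T ` cball 0 (real n))" by (rule B)
    have c2: "y0 \<in> closure (T ` cball 0 (real n))" using B[OF y0] \<epsilon> by simp
    obtain ya where ya: "ya \<in> T ` cball 0 (real n)" "dist ya (y0 + y) < \<eta> / 2"
      using c1 \<eta> unfolding closure_approachable by (meson half_gt_zero)
    obtain yb where yb: "yb \<in> T ` cball 0 (real n)" "dist yb y0 < \<eta> / 2"
      using c2 \<eta> unfolding closure_approachable by (meson half_gt_zero)
    obtain a where a: "norm a \<le> real n" "ya = T a" using ya(1) by auto
    obtain b where b: "norm b \<le> real n" "yb = T b" using yb(1) by auto
    have "norm (a - b) \<le> 2 * real n" using a b norm_triangle_ineq4[of a b] by linarith
    moreover have "T (a - b) - y = (T a - (y0 + y)) - (T b - y0)"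
      using real_vector.linear_diff[OF lin] by simp
    then have "norm (T (a - b) - y) \<le> norm (T a - (y0 + y)) + norm (T b - y0)"
      by (metis norm_triangle_ineq4)
    then have "norm (T (a - b) - y) < \<eta>" using ya(2) yb(2) a b by (simp add: dist_norm)
    ultimately show ?thesis by blast
  qed
  define c where "c = 4 * real n / \<epsilon>"
  have c0: "c \<ge> 0" using \<epsilon> by (simp add: c_def)
  have "\<exists>x. norm x \<le> c * norm y \<and> norm (T x - y) < \<eta>"
    if y: "y \<in> range T" and \<eta>: "\<eta> > 0" for y \<eta>
  proof (cases "y = 0")
    case True then show ?thesis using \<eta> real_vector.linear_0[OF lin] by (auto intro!: exI[of _ 0])
  next
    case False
    define s where "s = \<epsilon> / (2 * norm y)"
    have s0: "s > 0" using False \<epsilon> by (simp add: s_def)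
    obtain b where b: "y = T b" using y by blast
    have sy: "s *\<^sub>R y \<in> range T" using b real_vector.linear_scale[OF lin, of s b] by (metis rangeI)
    have "norm (s *\<^sub>R y) = \<epsilon> / 2" using False \<epsilon> s0 by (simp add: s_def)
    then have "norm (s *\<^sub>R y) < \<epsilon>" using \<epsilon> by simp
    then obtain x where x: "norm x \<le> 2 * real n" "norm (T x - s *\<^sub>R y) < s * \<eta>"
      using small[OF sy] s0 \<eta> by (meson mult_pos_pos)
    define x' where "x' = (1 / s) *\<^sub>R x"
    have "norm x' = norm x / s" using s0 by (simp add: x'_def)
    also have "\<dots> \<le> 2 * real n / s" using x(1) s0 by (simp add: divide_right_mono)
    also have "2 * real n / s = c * norm y" using False \<epsilon> by (simp add: s_def c_def field_simps)
    finally have n1: "norm x' \<le> c * norm y" .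
    have "T x' - y = (1 / s) *\<^sub>R (T x - s *\<^sub>R y)" using s0
      by (simp add: x'_def real_vector.linear_scale[OF lin] scaleR_diff_right)
    then have "norm (T x' - y) = norm (T x - s *\<^sub>R y) / s" using s0 by simp
    also have "\<dots> < \<eta>" using x(2) s0 by (simp add: divide_less_eq mult.commute)
    finally show ?thesis using n1 by blast
  qed
  then show ?thesis using c0 by blast
qed

lemma approx_to_exact:
  fixes T :: "'a::{complex_inner,complete_space} \<Rightarrow> 'a"
  assumes bl: "bounded_linear T" and c0: "c \<ge> 0"
    and ap: "\<And>y \<eta>. y \<in> range T \<Longrightarrow> \<eta> > 0 \<Longrightarrow> \<exists>x. norm x \<le> c * norm y \<and> norm (T x - y) < \<eta>"
    and y: "y \<in> range T"
  shows "\<exists>x. T x = y \<and> norm x \<le> 2 * c * norm y"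
proof (cases "y = 0")
  case True
  have lin: "linear T" using bl by (rule bounded_linear.linear)
  show ?thesis using True real_vector.linear_0[OF lin] by (auto intro!: exI[of _ 0])
next
  case False
  have lin: "linear T" using bl by (rule bounded_linear.linear)
  define h where "h = norm y"
  have h0: "h > 0" using False by (simp add: h_def)
  define f where "f z k = (SOME x. norm x \<le> c * norm z \<and> norm (T x - z) < h * (1/2) ^ Suc k)" for z k
  have f: "norm (f z k) \<le> c * norm z \<and> norm (T (f z k) - z) < h * (1/2) ^ Suc k"
    if "z \<in> range T" for z k
    unfolding f_def by (rule someI_ex) (rule ap[OF that], simp add: h0)
  define r where "r = rec_nat y (\<lambda>k z. z - T (f z k))"
  have r0: "r 0 = y" by (simp add: r_def)
  have rS: "r (Suc k) = r k - T (f (r k) k)" for k by (simp add: r_def)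
  have rT: "r k \<in> range T" for k
  proof (induction k)
    case 0 then show ?case using y r0 by simp
  next
    case (Suc k)
    then obtain a where "r k = T a" by blast
    then have "r (Suc k) = T (a - f (r k) k)" using rS real_vector.linear_diff[OF lin] by simp
    then show ?case by simp
  qed
  have rn: "norm (r k) \<le> h * (1/2) ^ k" for k
  proof (cases k)
    case 0 then show ?thesis using r0 by (simp add: h_def)
  next
    case (Suc j)
    have "norm (r (Suc j)) = norm (T (f (r j) j) - r j)" using rS by (simp add: norm_minus_commute)
    also have "\<dots> < h * (1/2) ^ Suc j" using f[OF rT] by blast
    finally show ?thesis using Suc by simp
  qed
  define xs where "xs k = f (r k) k" for k
  have xn: "norm (xs k) \<le> c * h * (1/2) ^ k" for k
  proof -
    have "norm (xs k) \<le> c * norm (r k)" using f[OF rT] by (simp add: xs_def)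
    also have "\<dots> \<le> c * (h * (1/2) ^ k)" using rn c0 by (simp add: mult_left_mono)
    finally show ?thesis by (simp add: mult.assoc)
  qed
  define s where "s n = (\<Sum>k<n. xs k)" for n
  have Ts: "T (s n) = y - r n" for n
  proof (induction n)
    case 0 then show ?case using r0 real_vector.linear_0[OF lin] by (simp add: s_def)
  next
    case (Suc n)
    have "T (s (Suc n)) = T (s n) + T (xs n)" using real_vector.linear_add[OF lin] by (simp add: s_def)
    then show ?case using Suc rS by (simp add: xs_def)
  qed
  have sd: "norm (s m - s n) \<le> 2 * c * h * ((1/2) ^ n - (1/2) ^ m)" if "n \<le> m" for n m
    using that
  proof (induction m rule: dec_induct)
    case base then show ?case by simp
  next
    case (step m)
    have "s (Suc m) - s n = (s m - s n) + xs m" by (simp add: s_def)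
    then have "norm (s (Suc m) - s n) \<le> norm (s m - s n) + norm (xs m)" by (metis norm_triangle_ineq)
    also have "\<dots> \<le> 2 * c * h * ((1/2) ^ n - (1/2) ^ m) + c * h * (1/2) ^ m" using step.IH xn[of m] by linarith
    also have "\<dots> = 2 * c * h * ((1/2) ^ n - (1/2) ^ Suc m)" by (simp add: algebra_simps)
    finally show ?case .
  qed
  have sd2: "norm (s m - s n) \<le> 2 * c * h * (1/2) ^ N" if "N \<le> m" "N \<le> n" for m n N
  proof -
    have ch: "0 \<le> 2 * c * h" using c0 h0 by simp
    have gen: "norm (s b - s a) \<le> 2 * c * h * (1/2) ^ N" if "a \<le> b" "N \<le> a" for a b
    proof -
      have "norm (s b - s a) \<le> 2 * c * h * ((1/2) ^ a - (1/2) ^ b)" by (rule sd[OF that(1)])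
      also have "\<dots> \<le> 2 * c * h * (1/2) ^ a" using ch by (simp add: mult_left_mono)
      also have "\<dots> \<le> 2 * c * h * (1/2) ^ N" using ch that(2) by (simp add: mult_left_mono power_decreasing)
      finally show ?thesis .
    qed
    show ?thesis
    proof (cases "n \<le> m")
      case True then show ?thesis using gen that by blast
    next
      case False then show ?thesis using gen[of m n] that by (simp add: norm_minus_commute)
    qed
  qed
  have "Cauchy s"
  proof (rule metric_CauchyI)
    fix e :: real assume e: "0 < e"
    have ch: "0 \<le> c * h" using c0 h0 by simp
    have "e / (2 * c * h + 1) > 0" using e ch by (intro divide_pos_pos) auto
    then obtain N where N: "(1/2::real) ^ N < e / (2 * c * h + 1)" using real_arch_pow_inv[of _ "1/2"] by auto
    have "2 * c * h * (1/2) ^ N \<le> (2 * c * h + 1) * (1/2) ^ N" by (simp add: algebra_simps)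
    also have "\<dots> < e"
    proof -
      have pos: "0 < 2 * c * h + 1" using ch by simp
      show ?thesis using pos_less_divide_eq[OF pos] N by (metis mult.commute)
    qed
    finally have bound: "2 * c * h * (1/2) ^ N < e" .
    have "\<forall>m\<ge>N. \<forall>n\<ge>N. dist (s m) (s n) < e"
    proof (intro allI impI)
      fix m n assume "N \<le> m" "N \<le> n"
      then have "norm (s m - s n) \<le> 2 * c * h * (1/2) ^ N" by (rule sd2)
      then show "dist (s m) (s n) < e" using bound by (simp add: dist_norm)
    qed
    then show "\<exists>M. \<forall>m\<ge>M. \<forall>n\<ge>M. dist (s m) (s n) < e" by blast
  qed
  then obtain x where x: "s \<longlonglongrightarrow> x" using Cauchy_convergent convergent_def by blast
  have t1: "(\<lambda>n. T (s n)) \<longlonglongrightarrow> T x" using bounded_linear.tendsto[OF bl x] .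
  have "(\<lambda>n. r n) \<longlonglongrightarrow> 0"
  proof (rule Lim_null_comparison)
    show "\<forall>\<^sub>F n in sequentially. norm (r n) \<le> h * (1/2) ^ n" using rn by simp
    show "(\<lambda>n. h * (1/2::real) ^ n) \<longlonglongrightarrow> 0"
      using tendsto_mult_right_zero[OF LIMSEQ_power_zero[of "1/2::real"]] by simp
  qed
  then have "(\<lambda>n. y - r n) \<longlonglongrightarrow> y - 0" by (intro tendsto_intros)
  then have t2: "(\<lambda>n. T (s n)) \<longlonglongrightarrow> y" using Ts by simp
  have Tx: "T x = y" using LIMSEQ_unique[OF t1 t2] .
  have "norm (s n) \<le> 2 * c * h" for n
  proof -
    have "norm (s n - s 0) \<le> 2 * c * h * ((1/2) ^ 0 - (1/2) ^ n)" by (rule sd) simp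
    moreover have "2 * c * h * ((1/2::real) ^ 0 - (1/2) ^ n) \<le> 2 * c * h"
      using c0 h0 by (simp add: mult_left_le)
    ultimately show ?thesis by (simp add: s_def)
  qed
  then have "norm x \<le> 2 * c * h"
    using LIMSEQ_le_const2[OF tendsto_norm[OF x]] by blast
  then show ?thesis using Tx unfolding h_def by blast
qed

lemma right_inverse:
  fixes B :: "'a::{complex_inner,complete_space} \<Rightarrow> 'a"
  assumes B: "bounded_clinear_op B" and cl: "closed (range B)"
  shows "\<exists>R. bounded_clinear_op R \<and> (\<forall>z\<in>range B. B (R z) = z)"
proof -
  have bl: "bounded_linear B" by (rule bclin_bounded_linear[OF B])
  obtain c where c0: "c \<ge> 0"
    and ap: "\<And>y \<eta>. y \<in> range B \<Longrightarrow> \<eta> > 0 \<Longrightarrow> \<exists>x. norm x \<le> c * norm y \<and> norm (B x - y) < \<eta>"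
    using approx_preimage[OF bl cl] by blast
  have pre: "\<exists>x. B x = y \<and> norm x \<le> 2 * c * norm y" if "y \<in> range B" for y
    by (rule approx_to_exact[OF bl c0 ap that])
  define K where "K = {x. B x = 0}"
  have Kc: "closed_csubspace K" unfolding K_def by (rule kernel_csub[OF B])
  define L where "L x = x - proj K x" for x
  have Lb: "bounded_clinear_op L" unfolding L_def
    by (intro bclin_diff_op bclin_id proj_bclin[OF Kc])
  have BL: "B (L x) = B x" for x
    using proj_in[OF Kc, of x] by (simp add: L_def K_def bclin_diff[OF B])
  have Lker: "L x = L x'" if "B x = B x'" for x x'
  proof -
    have "x - x' \<in> K" using that by (simp add: K_def bclin_diff[OF B])
    then have "L (x - x') = 0" using proj_fix[OF Kc] by (simp add: L_def)
    then show ?thesis by (simp add: bclin_diff[OF Lb])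
  qed
  have Lnorm: "norm (L x) \<le> norm x" for x
  proof -
    have "(norm (L x))\<^sup>2 \<le> (norm x)\<^sup>2" using proj_pythag[OF Kc, of x] by (simp add: L_def)
    then show ?thesis using power2_le_imp_le by simp
  qed
  have Rg: "closed_csubspace (range B)" by (rule range_csub[OF B cl])
  define PR where "PR = proj (range B)"
  have PRb: "bounded_clinear_op PR" unfolding PR_def by (rule proj_bclin[OF Rg])
  have PRin: "PR z \<in> range B" for z unfolding PR_def by (rule proj_in[OF Rg])
  have PRnorm: "norm (PR z) \<le> norm z" for z
  proof -
    have "(norm (PR z))\<^sup>2 \<le> (norm z)\<^sup>2" using proj_pythag[OF Rg, of z] by (simp add: PR_def)
    then show ?thesis using power2_le_imp_le by simp
  qed
  define P where "P z = (SOME x. B x = PR z)" for z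
  have BP: "B (P z) = PR z" for z
  proof -
    obtain a where "PR z = B a" using PRin[of z] by blast
    then show ?thesis unfolding P_def by (metis (mono_tags, lifting) someI_ex)
  qed
  define R where "R z = L (P z)" for z
  have Rfix: "B (R z) = z" if "z \<in> range B" for z
    using BL BP proj_fix[OF Rg that] by (simp add: R_def PR_def)
  have Radd: "R (z1 + z2) = R z1 + R z2" for z1 z2
  proof -
    have "B (P z1 + P z2) = B (P (z1 + z2))" by (simp add: bclin_add[OF B] BP bclin_add[OF PRb])
    then have "L (P (z1 + z2)) = L (P z1 + P z2)" using Lker by metis
    then show ?thesis by (simp add: R_def bclin_add[OF Lb])
  qed
  have RscaleC: "R (a *\<^sub>C z) = a *\<^sub>C R z" for a z
  proof -
    have "B (a *\<^sub>C P z) = B (P (a *\<^sub>C z))" by (simp add: bclin_scaleC[OF B] BP bclin_scaleC[OF PRb])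
    then have "L (P (a *\<^sub>C z)) = L (a *\<^sub>C P z)" using Lker by metis
    then show ?thesis by (simp add: R_def bclin_scaleC[OF Lb])
  qed
  have Rnorm: "norm (R z) \<le> norm z * (2 * c)" for z
  proof -
    obtain x' where x': "B x' = PR z" "norm x' \<le> 2 * c * norm (PR z)" using pre[OF PRin] by blast
    have "R z = L x'" unfolding R_def using Lker BP x'(1) by metis
    then have "norm (R z) \<le> norm x'" using Lnorm by simp
    also have "\<dots> \<le> 2 * c * norm (PR z)" by (rule x'(2))
    also have "\<dots> \<le> 2 * c * norm z" using PRnorm c0 by (simp add: mult_left_mono)
    finally show ?thesis by (simp add: mult.commute)
  qed
  have "bounded_clinear_op R" unfolding bounded_clinear_op_def using Radd RscaleC Rnorm by blast
  then show ?thesis using Rfix by blast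
qed

lemma compat_elim:
  fixes A :: "'a::complex_inner \<Rightarrow> 'a"
  assumes "compatible A S"
  obtains Q where "bounded_clinear_op Q" "\<And>y. Q y \<in> S" "\<And>s. s \<in> S \<Longrightarrow> Q s = s"
    "\<And>u v. cinner (A (u - Q u)) (Q v) = 0"
proof -
  obtain Q Qs where Q: "bounded_clinear_op Q" "Q \<circ> Q = Q" "range Q = S" "is_adjoint Q Qs" "A \<circ> Q = Qs \<circ> A"
    using assms unfolding compatible_def by blast
  have QQ: "Q (Q x) = Q x" for x using Q(2) by (metis comp_apply)
  have inS: "Q y \<in> S" for y using Q(3) by blast
  have Qfix: "Q s = s" if s: "s \<in> S" for s
  proof -
    obtain u where "s = Q u" using s Q(3) by blast
    then show ?thesis using QQ by simp
  qed
  have orth: "cinner (A (u - Q u)) (Q v) = 0" for u v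
  proof -
    have "cinner (Q v) (A (u - Q u)) = cinner v (Qs (A (u - Q u)))" using Q(4) by (simp add: is_adjoint_def)
    also have "Qs (A (u - Q u)) = A (Q (u - Q u))" using Q(5) by (metis comp_apply)
    also have "Q (u - Q u) = 0" using QQ bclin_diff[OF Q(1)] by simp
    finally have "cinner (Q v) (A (u - Q u)) = cinner v (A 0)" .
    then have "cinner (Q v) (A (u - Q u)) = 0" using bclin_zero[OF Q(1)]
      by (metis (no_types) assms bclin_zero compatible_def pos_bclin cinner_zero_right)
    then show ?thesis using cinner_commute[of "A (u - Q u)" "Q v"] by simp
  qed
  show ?thesis using that Q(1) inS Qfix orth by blast
qed

lemma bwd:
  fixes A1 A2 B :: "'a::{complex_inner,complete_space} \<Rightarrow> 'a"
  assumes A1: "positive_op A1" and A2: "positive_op A2" and B: "bounded_clinear_op B"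
    and cl: "closed (range B)"
    and C1: "compatible A1 (range B)" and C2: "compatible A2 {x. A1 (B x) = 0}"
  shows "\<exists>G. is_AA_inverse A1 A2 B G"
proof -
  have BA1: "bounded_clinear_op A1" using A1 by (rule pos_bclin)
  have BA2: "bounded_clinear_op A2" using A2 by (rule pos_bclin)
  obtain Q1 where Q1: "bounded_clinear_op Q1" "\<And>y. Q1 y \<in> range B" "\<And>s. s \<in> range B \<Longrightarrow> Q1 s = s"
    "\<And>u v. cinner (A1 (u - Q1 u)) (Q1 v) = 0"
    using compat_elim[OF C1] by blast
  let ?N = "{x. A1 (B x) = 0}"
  obtain Q2 where Q2: "bounded_clinear_op Q2" "\<And>y. Q2 y \<in> ?N" "\<And>s. s \<in> ?N \<Longrightarrow> Q2 s = s"
    "\<And>u v. cinner (A2 (u - Q2 u)) (Q2 v) = 0"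
    using compat_elim[OF C2] by blast
  obtain R where R: "bounded_clinear_op R" "\<And>z. z \<in> range B \<Longrightarrow> B (R z) = z"
    using right_inverse[OF B cl] by blast
  define r where "r y = R (Q1 y)" for y
  define G where "G y = r y - Q2 (r y)" for y
  have Gb: "bounded_clinear_op G" unfolding G_def r_def
    by (intro bclin_diff_op bclin_comp[OF R(1) Q1(1)] bclin_comp[OF Q2(1)])
  have orth1: "cinner (A1 (y - B (G y))) (B w) = 0" for y w
  proof -
    have "B (G y) = Q1 y - B (Q2 (r y))" using R(2)[OF Q1(2)] by (simp add: G_def r_def bclin_diff[OF B])
    then have eq: "y - B (G y) = (y - Q1 y) + B (Q2 (r y))" by simp
    have "A1 (y - B (G y)) = A1 (y - Q1 y) + A1 (B (Q2 (r y)))"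
      by (simp only: eq bclin_add[OF BA1])
    also have "A1 (B (Q2 (r y))) = 0" using Q2(2) by simp
    finally have "A1 (y - B (G y)) = A1 (y - Q1 y)" by simp
    moreover have "B w = Q1 (B w)" using Q1(3) by simp
    ultimately show ?thesis using Q1(4)[of y "B w"] by simp
  qed
  have GL: "is_A_LSS A1 B y (G y)" for y using LSS_iff[OF A1 B] orth1 by blast
  have Gmin: "seminormA A2 (G y) \<le> seminormA A2 x0" if L: "is_A_LSS A1 B y x0" for y x0
  proof -
    define d where "d = x0 - G y"
    have o1: "cinner (A1 (y - B x0)) (B d) = 0" using L LSS_iff[OF A1 B] by blast
    have o2: "cinner (A1 (y - B (G y))) (B d) = 0" by (rule orth1)
    have "A1 (y - B (G y)) - A1 (y - B x0) = A1 (B d)"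
      by (simp add: d_def bclin_diff[OF BA1, symmetric] bclin_diff[OF B])
    then have "cinner (A1 (B d)) (B d) = 0" using o1 o2
      by (metis cinner_diff_left diff_zero)
    then have "A1 (B d) = 0" using pos_null[OF A1, of "B d"] by simp
    then have Qd: "Q2 d = d" using Q2(3) by simp
    have "cinner (A2 (G y)) d = 0" using Q2(4)[of "r y" d] Qd by (simp add: G_def)
    then have "Re (cinner (A2 (G y + d)) (G y + d)) = Re (cinner (A2 (G y)) (G y)) + Re (cinner (A2 d) d)"
      using pos_expand_Re[OF A2, of "G y" d] by simp
    moreover have "G y + d = x0" by (simp add: d_def)
    ultimately have "Re (cinner (A2 (G y)) (G y)) \<le> Re (cinner (A2 x0) x0)"
      using pos_nonneg[OF A2, of d] by simp
    then show ?thesis using seminormA_le_iff[OF A2] by blast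
  qed
  have "is_AA_inverse A1 A2 B G"
    unfolding is_AA_inverse_def is_A_inverse_def using Gb GL Gmin by blast
  then show ?thesis by blast
qed

theorem mainTheorem18:
  fixes A1 A2 B :: "'a::{complex_inner, complete_space} \<Rightarrow> 'a"
  assumes "separable_space TYPE('a)"
    and "positive_op A1" and "positive_op A2"
    and "bounded_clinear_op B" and "closed (range B)"
  shows "(\<exists>G. is_AA_inverse A1 A2 B G) \<longleftrightarrow>
         (compatible A1 (range B) \<and> compatible A2 {x. A1 (B x) = 0})"
proof
  assume "\<exists>G. is_AA_inverse A1 A2 B G"
  then obtain G where G: "is_AA_inverse A1 A2 B G" by blast
  have "compatible A1 (range B)"
  proof -
    have "is_A_inverse A1 B G" using G by (simp add: is_AA_inverse_def)
    then show ?thesis by (rule fwd_compat1[OF assms(2) assms(4) assms(5)])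
  qed
  moreover have "compatible A2 {x. A1 (B x) = 0}"
    by (rule fwd_compat2[OF assms(2) assms(3) assms(4) G])
  ultimately show "compatible A1 (range B) \<and> compatible A2 {x. A1 (B x) = 0}" ..
next
  assume "compatible A1 (range B) \<and> compatible A2 {x. A1 (B x) = 0}"
  then show "\<exists>G. is_AA_inverse A1 A2 B G"
    using bwd[OF assms(2) assms(3) assms(4) assms(5)] by blast
qed


end
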